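(* Let $\mathcal{P}=[0,1]^n\cap K$ be a polytope, where $K$ is an affine subspace of $\mathbb{R}^n$, with vertex set $V(\mathcal{P})$. For vertices $v,w\in V(\mathcal{P})$ let $g^{(w)}_v:\mathcal{P}\to[0,1]$ be the coefficient of $v$ in the convex decomposition of $p$ induced by the fan triangulation $\mathcal{T}_w$, and let $$f_v(p)=\frac{1}{|V(\mathcal{P})|}\sum_{w\in V(\mathcal{P})}g^{(w)}_v(p).$$ Then each $f_v$ is polynomially bounded on $\mathcal{P}$.
   Context: Let $d=\dim\mathcal{P}$. For a vertex $w$, the fan triangulation $\mathcal{T}_w$ of $\mathcal{P}$ is the subdivision of $\mathcal{P}$ into simplices with disjoint interiors obtained by first triangulating (arbitrarily) each facet of $\mathcal{P}$ not containing $w$ into $(d-1)$-dimensional simplices (when a facet has more than $d$ vertices), and then taking the convex hull of $w$ with each such $(d-1)$-simplex. Each $p\in\mathcal{P}$ lies in some simplex $T$ of $\mathcal{T}_w$ and has a unique representation as a convex combination of the vertices of $T$; assigning coefficient $0$ to vertices of $\mathcal{P}$ not in $T$ gives a convex decomposition of $p$ into vertices of $\mathcal{P}$ (these agree on common faces of simplices), and $g^{(w)}_v(p)$ is the coefficient of $v$ in it. For a partition $[n]=A\sqcup S\sqcup B$, the open face is $F_{A,S,B}=\{p\in[0,1]^n: p_i=0\ (i\in A),\ 0<p_i<1\ (i\in S),\ p_i=1\ (i\in B)\}$. For $T\subseteq[n]$, $p^T=\prod_{i\in T}p_i$, $(1-p)^T=\prod_{i\in T}(1-p_i)$. A function $h:\mathcal{P}\to[0,1]$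 is polynomially bounded on $\mathcal{P}$ if there exist an integer $m\ge0$ and a real $c>0$ such that for every open face $F_{A,S,B}$: if some $q\in\mathcal{P}\cap F_{A,S,B}$ has $h(q)>0$, then $h(p)\ge c\left((1-p)^A p^S(1-p)^S p^B\right)^m$ for all $p\in\mathcal{P}$. *)

theory Defs
  imports "HOL-Analysis.Analysis"
begin

definition cube_poly :: "(real^'n) set \<Rightarrow> (real^'n) set" where
  "cube_poly K = {x. \<forall>i. 0 \<le> x$i \<and> x$i \<le> 1} \<inter> K"

definition verts :: "(real^'n) set \<Rightarrow> (real^'n) set" where
  "verts P = {v. v extreme_point_of P}"

definition facet_triangulation ::
  "(real^'n) set \<Rightarrow> (real^'n) set \<Rightarrow> (real^'n) set set \<Rightarrow> bool" where
  "facet_triangulation P F \<D> \<longleftrightarrow>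
     finite \<D> \<and>
     (\<forall>D\<in>\<D>. D \<subseteq> verts P \<inter> F \<and> \<not> affine_dependent D \<and>
              aff_dim (convex hull D) = aff_dim F) \<and>
     \<Union>((\<lambda>D. convex hull D) ` \<D>) = F \<and>
     (\<forall>D1\<in>\<D>. \<forall>D2\<in>\<D>. D1 \<noteq> D2 \<longrightarrow>
        rel_interior (convex hull D1) \<inter> rel_interior (convex hull D2) = {})"

text \<open>Vertex sets of the simplices of the fan triangulation T_w, given the chosen
  triangulations tri F of the facets F not containing w.  (Degenerate case d = 0,
  where P = {w} has no facets: T_w consists of the single 0-simplex {w}.)\<close>
definition fan_simplices ::
  "(real^'n) set \<Rightarrow> ((real^'n) set \<Rightarrow> (real^'n) set set) \<Rightarrow> real^'n \<Rightarrow> (real^'n) set set" where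
  "fan_simplices P tri w =
     (if aff_dim P = 0 then {{w}}
      else {insert w D | D F. F facet_of P \<and> w \<notin> F \<and> D \<in> tri F})"

definition fan_coeffs ::
  "(real^'n) set \<Rightarrow> ((real^'n) set \<Rightarrow> (real^'n) set set) \<Rightarrow> real^'n
     \<Rightarrow> (real^'n \<Rightarrow> real^'n \<Rightarrow> real) \<Rightarrow> bool" where
  "fan_coeffs P tri w g \<longleftrightarrow>
     (\<forall>p\<in>P. \<exists>S\<in>fan_simplices P tri w.
        p \<in> convex hull S \<and>
        (\<forall>v\<in>verts P - S. g v p = 0) \<and>
        (\<forall>v\<in>S. 0 \<le> g v p) \<and>
        (\<Sum>v\<in>S. g v p) = 1 \<and>
        (\<Sum>v\<in>S. g v p *\<^sub>R v) = p)"

definition open_face :: "'n set \<Rightarrow> 'n set \<Rightarrow> 'n set \<Rightarrow> (real^'n) set" where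
  "open_face A S B = {p. (\<forall>i\<in>A. p$i = 0) \<and> (\<forall>i\<in>S. 0 < p$i \<and> p$i < 1) \<and>
                         (\<forall>i\<in>B. p$i = 1) \<and> (\<forall>i. 0 \<le> p$i \<and> p$i \<le> 1)}"

definition poly_bounded :: "(real^'n::finite) set \<Rightarrow> (real^'n \<Rightarrow> real) \<Rightarrow> bool" where
  "poly_bounded P h \<longleftrightarrow>
     (\<forall>p\<in>P. 0 \<le> h p \<and> h p \<le> 1) \<and>
     (\<exists>m::nat. \<exists>c::real. c > 0 \<and>
        (\<forall>A S B. A \<inter> S = {} \<and> A \<inter> B = {} \<and> S \<inter> B = {} \<and> A \<union> S \<union> B = UNIV \<longrightarrow>
           (\<exists>q\<in>P \<inter> open_face A S B. h q > 0) \<longrightarrow>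
           (\<forall>p\<in>P. h p \<ge> c * ((\<Prod>i\<in>A. 1 - p$i) * (\<Prod>i\<in>S. p$i) *
                                 (\<Prod>i\<in>S. 1 - p$i) * (\<Prod>i\<in>B. p$i)) ^ m)))"

end

theory Submission imports Defs begin

lemma coord_forced:
  fixes q v :: "real^'n::finite"
  assumes fin: "finite S" and sub: "\<forall>u\<in>S. \<forall>j. 0 \<le> u$j \<and> u$j \<le> 1"
    and nn: "\<forall>u\<in>S. 0 \<le> c u" and s1: "(\<Sum>u\<in>S. c u) = 1"
    and sq: "(\<Sum>u\<in>S. c u *\<^sub>R u) = q" and vS: "v \<in> S" and cv: "c v > 0"
  shows "(q$i = 0 \<longrightarrow> v$i = 0) \<and> (q$i = 1 \<longrightarrow> v$i = 1)"
proof -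
  have qi: "q$i = (\<Sum>u\<in>S. c u * u$i)" using sq[symmetric] by simp
  have q1: "1 - q$i = (\<Sum>u\<in>S. c u * (1 - u$i))"
    using qi s1 by (simp add: algebra_simps sum_subtractf sum_distrib_left)
  have A: "q$i = 0 \<longrightarrow> v$i = 0"
  proof
    assume "q$i = 0"
    then have "(\<Sum>u\<in>S. c u * u$i) = 0" using qi by simp
    moreover have "\<forall>u\<in>S. 0 \<le> c u * u$i" using nn sub by simp
    ultimately have "\<forall>u\<in>S. c u * u$i = 0" using sum_nonneg_eq_0_iff[OF fin] by (metis (no_types, lifting))
    then have "c v * v$i = 0" using vS by (rule bspec)
    then show "v$i = 0" using cv by simp
  qed
  have B: "q$i = 1 \<longrightarrow> v$i = 1"
  proof
    assume "q$i = 1"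
    then have "(\<Sum>u\<in>S. c u * (1 - u$i)) = 0" using q1 by simp
    moreover have "\<forall>u\<in>S. 0 \<le> c u * (1 - u$i)" using nn sub by simp
    ultimately have "\<forall>u\<in>S. c u * (1 - u$i) = 0" using sum_nonneg_eq_0_iff[OF fin] by (metis (no_types, lifting))
    then have "c v * (1 - v$i) = 0" using vS by (rule bspec)
    then show "v$i = 1" using cv by simp
  qed
  show ?thesis using A B by blast
qed

lemma prod_le_factor:
  fixes f :: "'a \<Rightarrow> real"
  assumes "finite I" "i \<in> I" "\<forall>j\<in>I. 0 \<le> f j \<and> f j \<le> 1"
  shows "prod f I \<le> f i"
proof -
  have "prod f I = f i * prod f (I - {i})" using assms by (simp add: prod.remove)
  moreover have "prod f (I - {i}) \<le> 1" "0 \<le> prod f (I - {i})"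
    using assms by (auto intro: prod_le_1 prod_nonneg)
  moreover have "0 \<le> f i" using assms by auto
  ultimately show ?thesis by (simp add: mult_left_le)
qed

lemma prod_le1:
  fixes f :: "'a \<Rightarrow> real"
  assumes "\<forall>j\<in>I. 0 \<le> f j \<and> f j \<le> 1"
  shows "prod f I \<le> 1" "0 \<le> prod f I"
  using assms by (auto intro: prod_le_1 prod_nonneg)

definition PR :: "'n set \<Rightarrow> 'n set \<Rightarrow> 'n set \<Rightarrow> real^'n \<Rightarrow> real" where
  "PR A S B p = (\<Prod>i\<in>A. 1 - p$i) * (\<Prod>i\<in>S. p$i) * (\<Prod>i\<in>S. 1 - p$i) * (\<Prod>i\<in>B. p$i)"

lemma PR_bounds:
  fixes p :: "real^'n::finite"
  assumes cube: "\<forall>j. 0 \<le> p$j \<and> p$j \<le> 1"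
    and part: "A \<inter> S = {}" "A \<inter> B = {}" "S \<inter> B = {}" "A \<union> S \<union> B = UNIV"
  shows "PR A S B p \<le> 1" "0 \<le> PR A S B p"
    "i \<notin> A \<Longrightarrow> PR A S B p \<le> p$i"
    "i \<notin> B \<Longrightarrow> PR A S B p \<le> 1 - p$i"
proof -
  have a1: "(\<Prod>i\<in>A. 1 - p$i) \<le> 1" "0 \<le> (\<Prod>i\<in>A. 1 - p$i)" using cube by (auto intro: prod_le1)
  have a2: "(\<Prod>i\<in>S. p$i) \<le> 1" "0 \<le> (\<Prod>i\<in>S. p$i)" using cube by (auto intro: prod_le1)
  have a3: "(\<Prod>i\<in>S. 1 - p$i) \<le> 1" "0 \<le> (\<Prod>i\<in>S. 1 - p$i)" using cube by (auto intro: prod_le1)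
  have a4: "(\<Prod>i\<in>B. p$i) \<le> 1" "0 \<le> (\<Prod>i\<in>B. p$i)" using cube by (auto intro: prod_le1)
  note defs = PR_def
  have m4: "\<And>a b c d::real. 0\<le>a \<Longrightarrow> a\<le>1 \<Longrightarrow> 0\<le>b \<Longrightarrow> b\<le>1 \<Longrightarrow> 0\<le>c \<Longrightarrow> c\<le>1 \<Longrightarrow> 0\<le>d \<Longrightarrow> d\<le>1
     \<Longrightarrow> a*b*c*d \<le> a \<and> a*b*c*d \<le> b \<and> a*b*c*d \<le> c \<and> a*b*c*d \<le> d \<and> 0 \<le> a*b*c*d"
  proof -
    fix a b c d :: real
    assume h: "0\<le>a" "a\<le>1" "0\<le>b" "b\<le>1" "0\<le>c" "c\<le>1" "0\<le>d" "d\<le>1"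
    have p1: "0 \<le> b*c*d" "b*c*d \<le> 1" using h by (auto intro: mult_le_one)
    have p2: "0 \<le> a*c*d" "a*c*d \<le> 1" using h by (auto intro: mult_le_one)
    have p3: "0 \<le> a*b*d" "a*b*d \<le> 1" using h by (auto intro: mult_le_one)
    have p4: "0 \<le> a*b*c" "a*b*c \<le> 1" using h by (auto intro: mult_le_one)
    have e: "a*b*c*d = a*(b*c*d)" "a*b*c*d = b*(a*c*d)" "a*b*c*d = c*(a*b*d)" "a*b*c*d = d*(a*b*c)"
      by (simp_all add: ac_simps)
    have "a*b*c*d \<le> a" by (subst e(1)) (simp add: mult_left_le h p1)
    moreover have "a*b*c*d \<le> b" by (subst e(2)) (simp add: mult_left_le h p2)
    moreover have "a*b*c*d \<le> c" by (subst e(3)) (simp add: mult_left_le h p3)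
    moreover have "a*b*c*d \<le> d" by (subst e(4)) (simp add: mult_left_le h p4)
    moreover have "0 \<le> a*b*c*d" using h by simp
    ultimately show "a*b*c*d \<le> a \<and> a*b*c*d \<le> b \<and> a*b*c*d \<le> c \<and> a*b*c*d \<le> d \<and> 0 \<le> a*b*c*d"
      by blast
  qed
  note M = m4[OF a1(2) a1(1) a2(2) a2(1) a3(2) a3(1) a4(2) a4(1)]
  show "PR A S B p \<le> 1" "0 \<le> PR A S B p" using M a1 unfolding PR_def by linarith+
  show "PR A S B p \<le> p$i" if "i \<notin> A"
  proof -
    have "i \<in> S \<or> i \<in> B" using that part by auto
    then show ?thesis
    proof
      assume "i \<in> S"
      then have "(\<Prod>i\<in>S. p$i) \<le> p$i" using cube by (intro prod_le_factor) auto
      then show ?thesis using M unfolding PR_def by linarith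
    next
      assume "i \<in> B"
      then have "(\<Prod>i\<in>B. p$i) \<le> p$i" using cube by (intro prod_le_factor) auto
      then show ?thesis using M unfolding PR_def by linarith
    qed
  qed
  show "PR A S B p \<le> 1 - p$i" if "i \<notin> B"
  proof -
    have "i \<in> S \<or> i \<in> A" using that part by auto
    then show ?thesis
    proof
      assume "i \<in> S"
      then have "(\<Prod>i\<in>S. 1 - p$i) \<le> 1 - p$i" using cube by (intro prod_le_factor) auto
      then show ?thesis using M unfolding PR_def by linarith
    next
      assume "i \<in> A"
      then have "(\<Prod>i\<in>A. 1 - p$i) \<le> 1 - p$i" using cube by (intro prod_le_factor) auto
      then show ?thesis using M unfolding PR_def by linarith
    qed
  qed
qed


lemma face_coord:
  fixes K :: "(real^'n::finite) set"
  assumes aff: "affine K" and F: "F face_of cube_poly K" and vP: "v \<in> cube_poly K"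
    and vF: "v \<notin> F" and xF: "x \<in> F"
  shows "\<exists>i. (x$i = 0 \<or> x$i = 1) \<and> v$i \<noteq> x$i"
proof (rule ccontr)
  assume H: "\<not> ?thesis"
  have xP: "x \<in> cube_poly K" using F xF face_of_imp_subset by blast
  have xc: "\<forall>j. 0 \<le> x$j \<and> x$j \<le> 1" "x \<in> K" using xP by (auto simp: cube_poly_def)
  have vc: "\<forall>j. 0 \<le> v$j \<and> v$j \<le> 1" "v \<in> K" using vP by (auto simp: cube_poly_def)
  define e where "e i = (if 0 < x$i \<and> x$i < 1 then min (x$i) (1 - x$i) else 1)" for i
  define \<epsilon> where "\<epsilon> = Min (range e)"
  have epos: "\<forall>i. 0 < e i" unfolding e_def by auto
  have \<epsilon>le: "\<epsilon> \<le> e i" for i unfolding \<epsilon>_def by (intro Min_le) auto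
  have \<epsilon>pos: "0 < \<epsilon>" unfolding \<epsilon>_def using epos by (subst Min_gr_iff) auto
  define y where "y = (1 + \<epsilon>) *\<^sub>R x + (- \<epsilon>) *\<^sub>R v"
  have "\<forall>a b. a + b = 1 \<longrightarrow> a *\<^sub>R x + b *\<^sub>R v \<in> K" using aff xc(2) vc(2) unfolding affine_def by blast
  have yK: "y \<in> K" unfolding y_def by (rule mem_affine[OF aff xc(2) vc(2)]) simp
  have yc: "0 \<le> y$j \<and> y$j \<le> 1" for j
  proof (cases "0 < x$j \<and> x$j < 1")
    case True
    then have "\<epsilon> \<le> x$j" "\<epsilon> \<le> 1 - x$j" using \<epsilon>le[of j] unfolding e_def by auto
    moreover have "y$j = x$j + \<epsilon> * (x$j - v$j)" unfolding y_def by (simp add: algebra_simps)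
    moreover have d: "x$j - v$j \<le> 1" "-1 \<le> x$j - v$j" using vc(1) xc(1) by (smt (verit))+
    moreover have "\<epsilon> * (x$j - v$j) \<le> \<epsilon> * 1"
      using d(1) \<epsilon>pos by (intro mult_left_mono) auto
    moreover have "\<epsilon> * (-1) \<le> \<epsilon> * (x$j - v$j)"
      using d(2) \<epsilon>pos by (intro mult_left_mono) auto
    ultimately show ?thesis by linarith
  next
    case False
    moreover have "0 \<le> x$j" "x$j \<le> 1" using xc(1) by auto
    ultimately have "x$j = 0 \<or> x$j = 1" by linarith
    then have "v$j = x$j" using H by blast
    then have "y$j = x$j" unfolding y_def by (simp add: algebra_simps)
    then show ?thesis using xc(1) by simp
  qed
  have yP: "y \<in> cube_poly K" using yK yc by (simp add: cube_poly_def)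
  have xv: "x \<noteq> v" using xF vF by blast
  have vy: "v \<noteq> y"
  proof
    assume "v = y"
    then have "(1 + \<epsilon>) *\<^sub>R v = (1 + \<epsilon>) *\<^sub>R x" unfolding y_def by (simp add: algebra_simps)
    then show False using xv \<epsilon>pos by simp
  qed
  define u where "u = 1 / (1 + \<epsilon>)"
  have u: "0 < u" "u < 1" unfolding u_def using \<epsilon>pos by auto
  have "(1 - u) *\<^sub>R v + u *\<^sub>R y = x"
  proof -
    have e1: "(1 - u) *\<^sub>R v + u *\<^sub>R y = (1 - u - u * \<epsilon>) *\<^sub>R v + (u * (1 + \<epsilon>)) *\<^sub>R x"
      unfolding y_def by (simp add: algebra_simps)
    have e2: "1 - u - u * \<epsilon> = 0" "u * (1 + \<epsilon>) = 1" unfolding u_def using \<epsilon>pos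
      by (auto simp: field_simps)
    show ?thesis using e1 e2 by simp
  qed
  then have "x \<in> open_segment v y" unfolding in_segment(2) using vy u by blast
  then have "v \<in> F" using face_ofD[OF F _ vP yP xF] by blast
  then show False using vF by blast
qed


lemma lam_bound:
  fixes K :: "(real^'n::finite) set" and c :: "real^'n \<Rightarrow> real"
  assumes aff: "affine K" and F: "F face_of cube_poly K" and vP: "v \<in> cube_poly K"
    and vF: "v \<notin> F" and fin: "finite D" and DF: "D \<subseteq> F"
    and nn: "\<forall>u\<in>insert v D. 0 \<le> c u" and s1: "(\<Sum>u\<in>insert v D. c u) = 1"
    and sp: "(\<Sum>u\<in>insert v D. c u *\<^sub>R u) = p"
  shows "c v = 1 \<or> (\<exists>i. (v$i \<noteq> 0 \<and> p$i \<le> c v) \<or> (v$i \<noteq> 1 \<and> 1 - p$i \<le> c v))"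
proof (cases "c v = 1")
  case True then show ?thesis by simp
next
  case False
  have vD: "v \<notin> D" using DF vF by blast
  have s1': "c v + sum c D = 1" using s1 fin vD by simp
  have sp': "c v *\<^sub>R v + (\<Sum>u\<in>D. c u *\<^sub>R u) = p" using sp fin vD by simp
  have "0 \<le> sum c D" using nn by (auto intro: sum_nonneg)
  define t where "t = sum c D"
  have tpos: "0 < t" using False s1' \<open>0 \<le> sum c D\<close> unfolding t_def by linarith
  have cv: "c v = 1 - t" "0 \<le> c v" using s1' nn unfolding t_def by auto
  define x where "x = (\<Sum>u\<in>D. (c u / t) *\<^sub>R u)"
  have "(\<Sum>u\<in>D. c u / t) = 1" using tpos unfolding t_def by (simp add: sum_divide_distrib[symmetric])
  then have xF: "x \<in> F" unfolding x_def
    using convex_sum[OF fin face_of_imp_convex[OF F], of "\<lambda>u. c u / t" "\<lambda>u. u"] nn tpos DF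
    by auto
  have tx: "t *\<^sub>R x = (\<Sum>u\<in>D. c u *\<^sub>R u)" unfolding x_def using tpos
    by (simp add: scaleR_sum_right)
  have pe: "p = c v *\<^sub>R v + t *\<^sub>R x" using sp' tx by simp
  obtain i where i: "x$i = 0 \<or> x$i = 1" "v$i \<noteq> x$i" using face_coord[OF aff F vP vF xF] by blast
  have pi: "p$i = c v * v$i + t * x$i" using pe by simp
  have vc: "0 \<le> v$i" "v$i \<le> 1" using vP by (auto simp: cube_poly_def)
  show ?thesis
  proof (cases "x$i = 0")
    case True
    then have "p$i \<le> c v" using pi vc cv by (simp add: mult_left_le)
    then show ?thesis using i True by auto
  next
    case False
    then have x1: "x$i = 1" using i by simp
    have tt: "t = 1 - c v" using cv by simp
    have "1 - p$i = c v * (1 - v$i)" using pi x1 unfolding tt by (simp add: algebra_simps)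
    then have "1 - p$i \<le> c v" using vc cv by (simp add: mult_left_le)
    then show ?thesis using i x1 by auto
  qed
qed

lemma ft_sub:
  assumes "facet_triangulation P F T" "D \<in> T"
  shows "D \<subseteq> verts P" "D \<subseteq> F"
  using assms unfolding facet_triangulation_def by blast+

lemma fs_cases:
  assumes "S \<in> fan_simplices P tri w"
  shows "(aff_dim P = 0 \<and> S = {w}) \<or>
         (aff_dim P \<noteq> 0 \<and> (\<exists>D F. S = insert w D \<and> F facet_of P \<and> w \<notin> F \<and> D \<in> tri F))"
  using assms unfolding fan_simplices_def by (cases "aff_dim P = 0") auto

theorem lemma14:
  fixes K :: "(real^'n::finite) set"
    and tri :: "real^'n \<Rightarrow> (real^'n) set \<Rightarrow> (real^'n) set set"
    and g :: "real^'n \<Rightarrow> real^'n \<Rightarrow> real^'n \<Rightarrow> real"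
    and v :: "real^'n"
  assumes "affine K"
    and "\<forall>w\<in>verts (cube_poly K). \<forall>F. F facet_of cube_poly K \<and> w \<notin> F \<longrightarrow>
           facet_triangulation (cube_poly K) F (tri w F)"
    and "\<forall>w\<in>verts (cube_poly K). fan_coeffs (cube_poly K) (tri w) w (g w)"
    and "v \<in> verts (cube_poly K)"
  shows "poly_bounded (cube_poly K)
           (\<lambda>p. (1 / real (card (verts (cube_poly K)))) *
                (\<Sum>w\<in>verts (cube_poly K). g w v p))"
proof -
  note aff = assms(1) and tri = assms(2) and fc = assms(3) and vV = assms(4)
  define P where "P = cube_poly K"
  define V where "V = verts P"
  define N where "N = card V"
  define h where "h p = (1 / real N) * (\<Sum>w\<in>V. g w v p)" for p
  have VP: "V \<subseteq> P" unfolding V_def verts_def extreme_point_of_def by auto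
  have Pc: "\<And>u j. u \<in> P \<Longrightarrow> 0 \<le> u$j \<and> u$j \<le> 1" unfolding P_def cube_poly_def by auto
  have vV': "v \<in> V" using vV unfolding V_def P_def .
  have subV: "S \<subseteq> V" if w: "w \<in> V" and S: "S \<in> fan_simplices P (tri w) w" for w S
  proof (cases "aff_dim P = 0")
    case True then show ?thesis using fs_cases[OF S] w by auto
  next
    case False
    then obtain D F where "S = insert w D" "F facet_of P" "w \<notin> F" "D \<in> tri w F"
      using fs_cases[OF S] by blast
    moreover then have "facet_triangulation P F (tri w F)" using tri w unfolding P_def V_def by blast
    ultimately show ?thesis using w ft_sub unfolding V_def by blast
  qed
  have fcw: "\<exists>S\<in>fan_simplices P (tri w) w. p \<in> convex hull S \<and>
        (\<forall>u\<in>V - S. g w u p = 0) \<and> (\<forall>u\<in>S. 0 \<le> g w u p) \<and>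
        (\<Sum>u\<in>S. g w u p) = 1 \<and> (\<Sum>u\<in>S. g w u p *\<^sub>R u) = p"
    if "w \<in> V" "p \<in> P" for w p
  proof -
    have "fan_coeffs P (tri w) w (g w)" using fc that(1) unfolding P_def V_def by blast
    then show ?thesis unfolding fan_coeffs_def V_def using that(2) by (rule bspec)
  qed
  have gb: "0 \<le> g w v p \<and> g w v p \<le> 1" if w: "w \<in> V" and p: "p \<in> P" for w p
  proof -
    obtain S where S: "S \<in> fan_simplices P (tri w) w" "\<forall>u\<in>V - S. g w u p = 0"
      "\<forall>u\<in>S. 0 \<le> g w u p" "(\<Sum>u\<in>S. g w u p) = 1" using fcw[OF w p] by blast
    have fS: "finite S" using S(4) sum.infinite by fastforce
    show ?thesis
    proof (cases "v \<in> S")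
      case True
      then have "g w v p \<le> (\<Sum>u\<in>S. g w u p)" using fS S(3) by (intro member_le_sum) auto
      then show ?thesis using S True by auto
    next
      case False then show ?thesis using S vV' by auto
    qed
  qed
  have part1: "\<forall>p\<in>P. 0 \<le> h p \<and> h p \<le> 1"
  proof
    fix p assume p: "p \<in> P"
    show "0 \<le> h p \<and> h p \<le> 1"
    proof (cases "finite V")
      case False then show ?thesis unfolding h_def N_def by simp
    next
      case True
      have Npos: "0 < N" unfolding N_def using True vV' by (auto simp: card_gt_0_iff)
      have "0 \<le> (\<Sum>w\<in>V. g w v p)" using gb p by (auto intro: sum_nonneg)
      moreover have "(\<Sum>w\<in>V. g w v p) \<le> real N * 1" unfolding N_def
        using gb p by (intro sum_bounded_above) auto
      ultimately show ?thesis unfolding h_def using Npos by (auto simp: field_simps)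
    qed
  qed
  have part2: "\<exists>m::nat. \<exists>c::real. c > 0 \<and>
        (\<forall>A S B. A \<inter> S = {} \<and> A \<inter> B = {} \<and> S \<inter> B = {} \<and> A \<union> S \<union> B = UNIV \<longrightarrow>
           (\<exists>q\<in>P \<inter> open_face A S B. h q > 0) \<longrightarrow>
           (\<forall>p\<in>P. h p \<ge> c * ((\<Prod>i\<in>A. 1 - p$i) * (\<Prod>i\<in>S. p$i) *
                                 (\<Prod>i\<in>S. 1 - p$i) * (\<Prod>i\<in>B. p$i)) ^ m))"
  proof (cases "finite V")
    case False
    then show ?thesis unfolding h_def N_def by (intro exI[where x="1::nat"] exI[where x="1::real"]) simp
  next
    case True
    have Npos: "0 < N" unfolding N_def using True vV' by (auto simp: card_gt_0_iff)
    show ?thesis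
    proof (rule exI[where x="1::nat"], rule exI[where x="1 / real N"], intro conjI allI impI ballI)
      show "0 < 1 / real N" using Npos by simp
      fix A S B p
      assume part: "A \<inter> S = {} \<and> A \<inter> B = {} \<and> S \<inter> B = {} \<and> A \<union> S \<union> B = UNIV"
        and ex: "\<exists>q\<in>P \<inter> open_face A S B. 0 < h q" and p: "p \<in> P"
      obtain q where q: "q \<in> P" "q \<in> open_face A S B" "0 < h q" using ex by blast
      have "0 < (\<Sum>w\<in>V. g w v q)" using q(3) Npos unfolding h_def
        by (simp add: zero_less_divide_iff)
      have "\<exists>w. w \<in> V \<and> 0 < g w v q"
      proof (rule ccontr)
        assume "\<not> (\<exists>w. w \<in> V \<and> 0 < g w v q)"
        then have "(\<Sum>w\<in>V. g w v q) \<le> 0" by (intro sum_nonpos) (auto simp: not_less)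
        then show False using \<open>0 < (\<Sum>w\<in>V. g w v q)\<close> by simp
      qed
      then obtain w where w: "w \<in> V" "0 < g w v q" by blast
      obtain T where T: "T \<in> fan_simplices P (tri w) w" "\<forall>u\<in>V - T. g w u q = 0"
        "\<forall>u\<in>T. 0 \<le> g w u q" "(\<Sum>u\<in>T. g w u q) = 1" "(\<Sum>u\<in>T. g w u q *\<^sub>R u) = q"
        using fcw[OF w(1) q(1)] by blast
      have fT: "finite T" using T(4) sum.infinite by fastforce
      have vT: "v \<in> T"
      proof (rule ccontr)
        assume "v \<notin> T"
        then have "g w v q = 0" using T(2) vV' by blast
        then show False using w(2) by simp
      qed
      have TP: "\<forall>u\<in>T. \<forall>j. 0 \<le> u$j \<and> u$j \<le> 1" using subV[OF w(1) T(1)] VP Pc by blast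
      have forced: "(q$i = 0 \<longrightarrow> v$i = 0) \<and> (q$i = 1 \<longrightarrow> v$i = 1)" for i
        using coord_forced[OF fT TP T(3) T(4) T(5) vT w(2)] .
      have pc: "\<forall>j. 0 \<le> p$j \<and> p$j \<le> 1" using Pc p by blast
      have partl: "A \<inter> S = {}" "A \<inter> B = {}" "S \<inter> B = {}" "A \<union> S \<union> B = UNIV" using part by auto
      note PRb = PR_bounds[OF pc partl]
      have qA: "\<And>i. i \<in> A \<Longrightarrow> q$i = 0" and qB: "\<And>i. i \<in> B \<Longrightarrow> q$i = 1"
        using q(2) unfolding open_face_def by auto
      have key: "PR A S B p \<le> g v v p"
      proof -
        obtain U where U: "U \<in> fan_simplices P (tri v) v" "\<forall>u\<in>V - U. g v u p = 0"
          "\<forall>u\<in>U. 0 \<le> g v u p" "(\<Sum>u\<in>U. g v u p) = 1" "(\<Sum>u\<in>U. g v u p *\<^sub>R u) = p"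
          using fcw[OF vV' p] by blast
        have fU: "finite U" using U(4) sum.infinite by fastforce
        show ?thesis
        proof (cases "aff_dim P = 0")
          case True
          then have "U = {v}" using fs_cases[OF U(1)] by blast
          then have "g v v p = 1" using U(4) by simp
          then show ?thesis using PRb(1) by simp
        next
          case False
          then obtain D F where DF: "U = insert v D" "F facet_of P" "v \<notin> F" "D \<in> tri v F"
            using fs_cases[OF U(1)] by blast
          have "facet_triangulation P F (tri v F)" using tri vV' DF unfolding P_def V_def by blast
          then have DsF: "D \<subseteq> F" using DF(4) by (rule ft_sub)
          have fD: "finite D" using fU DF(1) by simp
          have vP: "v \<in> cube_poly K" using vV' VP P_def by blast
          have Ff: "F face_of cube_poly K" using DF(2) facet_of_imp_face_of P_def by blast
          from lam_bound[OF aff Ff vP DF(3) fD DsF, of "\<lambda>u. g v u p" p] U(3,4,5) DF(1)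
          have "g v v p = 1 \<or> (\<exists>i. (v$i \<noteq> 0 \<and> p$i \<le> g v v p) \<or> (v$i \<noteq> 1 \<and> 1 - p$i \<le> g v v p))"
            by simp
          then show ?thesis
          proof (elim disjE exE)
            assume "g v v p = 1" then show ?thesis using PRb(1) by simp
          next
            fix i assume i: "v$i \<noteq> 0 \<and> p$i \<le> g v v p"
            then have "i \<notin> A" using forced qA by blast
            then show ?thesis using PRb(3)[of i] i by linarith
          next
            fix i assume i: "v$i \<noteq> 1 \<and> 1 - p$i \<le> g v v p"
            then have "i \<notin> B" using forced qB by blast
            then show ?thesis using PRb(4)[of i] i by linarith
          qed
        qed
      qed
      have "g v v p \<le> (\<Sum>w\<in>V. g w v p)" using True vV' gb p by (intro member_le_sum) auto
      then have "PR A S B p \<le> (\<Sum>w\<in>V. g w v p)" using key by linarith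
      then have "(1 / real N) * PR A S B p \<le> h p" unfolding h_def using Npos
        by (intro mult_left_mono) auto
      then show "1 / real N * ((\<Prod>i\<in>A. 1 - p$i) * (\<Prod>i\<in>S. p$i) *
                                 (\<Prod>i\<in>S. 1 - p$i) * (\<Prod>i\<in>B. p$i)) ^ 1 \<le> h p"
        unfolding PR_def by simp
    qed
  qed
  have pb: "poly_bounded P h" unfolding poly_bounded_def using part1 part2 by (rule conjI)
  have hh: "h = (\<lambda>p. (1 / real (card (verts (cube_poly K)))) * (\<Sum>w\<in>verts (cube_poly K). g w v p))"
    by (rule ext) (simp only: h_def N_def V_def P_def)
  show ?thesis using pb unfolding hh P_def .
qed

end
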